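(* Let $s\in\mathbb{Z}$ and let $f$ be a $k$-face of $\square_{\alpha_s}$ with vertices $p_1,\ldots,p_{2^k}\in G_{\alpha_s}$. Then: (1) the set $\{g_{\alpha_s}(p_1),\ldots,g_{\alpha_s}(p_{2^k})\}$ is the vertex set of a face $e$ of $\square_{\alpha_{s+1}}$; (2) for every face $e_1\subseteq e$ there is a face $f_1\subseteq f$ with $g_{\alpha_s}(f_1)=e_1$; (3) if $e_1,e_2$ are two opposite facets of $e$, then there exists a pair of opposite facets $f_1,f_2$ of $f$ with $g_{\alpha_s}(f_1)=e_1$ and $g_{\alpha_s}(f_2)=e_2$.
   Context: Fix $d\ge 1$, $\lambda>0$ and scales $\alpha_s:=\lambda 2^s$, $s\in\mathbb{Z}$. The grids $(G_{\alpha_s})_{s\in\mathbb{Z}}$ satisfy $G_{\alpha_0}=\lambda\mathbb{Z}^d$ and, for every $s$, $G_{\alpha_{s+1}}=2(G_{\alpha_s}-O_s)+O_s+\frac{\alpha_s}{2}\varepsilon_s$ for some $O_s\in G_{\alpha_s}$ and sign vector $\varepsilon_s\in\{-1,+1\}^d$; so $G_{\alpha_s}$ is a translate of $\alpha_s\mathbb{Z}^d$. $\mathrm{Vor}_G(x)$ is the Voronoi cell of $x\in G$ w.r.t. $G$ (the closed axis-parallel cube of side $\alpha_s$ centered at $x$ for $G=G_{\alpha_s}$); each $x\in G_{\alpha_s}$ lies in $\mathrm{Vor}_{G_{\alpha_{s+1}}}(y)$ for a unique $y\in G_{\alpha_{s+1}}$. The cubical complex $\square_{\alpha_s}$ consists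 of the faces $\prod_{j=1}^d[x_j,x_j+m_j]$ with $(x_1,\dots,x_d)\in G_{\alpha_s}$ and each $m_j\in\{0,\alpha_s\}$; its dimension is the number of $j$ with $m_j\neq 0$, and its vertices are its points lying in $G_{\alpha_s}$ ($0$-faces are the grid points). A facet of a $k$-face $E$ is a $(k-1)$-face contained in $E$; two facets of $E$ are opposite if they are disjoint. The map $g_{\alpha_s}$ sends a vertex $x\in G_{\alpha_s}$ to the unique $y\in G_{\alpha_{s+1}}$ with $x\in\mathrm{Vor}_{G_{\alpha_{s+1}}}(y)$, and sends a face $f$ of $\square_{\alpha_s}$ to the convex hull of the images of its vertices. *)

theory Defs
  imports "HOL-Analysis.Analysis"
begin

definition scale :: "real \<Rightarrow> int \<Rightarrow> real" where
  "scale lam s = lam * (2 powi s)"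

definition int_lattice :: "real \<Rightarrow> (real^'n) set" where
  "int_lattice a = {x. \<forall>i. \<exists>k::int. x $ i = a * of_int k}"

definition Vor :: "(real^'n) set \<Rightarrow> real^'n \<Rightarrow> (real^'n) set" where
  "Vor G x = {y. \<forall>z\<in>G. dist y x \<le> dist y z}"

definition face_box :: "real^'n \<Rightarrow> real^'n \<Rightarrow> (real^'n) set" where
  "face_box x m = {y. \<forall>j. x $ j \<le> y $ j \<and> y $ j \<le> x $ j + m $ j}"

definition is_kface :: "(real^'n) set \<Rightarrow> real \<Rightarrow> nat \<Rightarrow> (real^'n) set \<Rightarrow> bool" where
  "is_kface G a k F \<longleftrightarrow> (\<exists>x m. x \<in> G \<and> (\<forall>j. m $ j \<in> {0, a}) \<and>
      card {j. m $ j \<noteq> 0} = k \<and> F = face_box x m)"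

definition is_face :: "(real^'n) set \<Rightarrow> real \<Rightarrow> (real^'n) set \<Rightarrow> bool" where
  "is_face G a F \<longleftrightarrow> (\<exists>k. is_kface G a k F)"

definition vertices :: "(real^'n) set \<Rightarrow> (real^'n) set \<Rightarrow> (real^'n) set" where
  "vertices G F = F \<inter> G"

definition is_facet :: "(real^'n) set \<Rightarrow> real \<Rightarrow> (real^'n) set \<Rightarrow> (real^'n) set \<Rightarrow> bool" where
  "is_facet G a E F \<longleftrightarrow> (\<exists>k. is_kface G a (Suc k) E \<and> is_kface G a k F \<and> F \<subseteq> E)"

definition gvert :: "(real^'n) set \<Rightarrow> real^'n \<Rightarrow> real^'n" where
  "gvert G' x = (THE y. y \<in> G' \<and> x \<in> Vor G' y)"

definition gface :: "(real^'n) set \<Rightarrow> (real^'n) set \<Rightarrow> (real^'n) set \<Rightarrow> (real^'n) set" where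
  "gface G G' F = convex hull (gvert G' ` vertices G F)"

end

theory Submission
  imports Defs
begin

definition latt :: "real^'n \<Rightarrow> real \<Rightarrow> (real^'n) set" where
  "latt c A = {x. \<forall>i. \<exists>k::int. x $ i = c $ i + A * of_int k}"

definition PV :: "('n \<Rightarrow> real set) \<Rightarrow> (real^'n) set" where
  "PV S = {z. \<forall>j. z $ j \<in> S j}"

lemma face_box_cbox: "face_box x m = cbox x (x + m)"
  by (auto simp: face_box_def mem_box_cart)

lemma face_box_sub:
  assumes "\<forall>j. m $ j \<ge> 0"
  shows "face_box x m \<subseteq> face_box y r \<longleftrightarrow> (\<forall>j. y$j \<le> x$j \<and> x$j + m$j \<le> y$j + r$j)"
proof
  assume h: "face_box x m \<subseteq> face_box y r"
  have "x \<in> face_box x m" "x + m \<in> face_box x m" using assms by (auto simp: face_box_def)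
  then have "x \<in> face_box y r" "x + m \<in> face_box y r" using h by blast+
  then show "\<forall>j. y$j \<le> x$j \<and> x$j + m$j \<le> y$j + r$j" by (simp add: face_box_def)
next
  assume "\<forall>j. y$j \<le> x$j \<and> x$j + m$j \<le> y$j + r$j"
  then show "face_box x m \<subseteq> face_box y r" unfolding face_box_def
    by (smt (verit) mem_Collect_eq subsetI)
qed

lemma face_box_eq:
  assumes "\<forall>j. m $ j \<ge> 0" "\<forall>j. r $ j \<ge> 0" "face_box x m = face_box y r"
  shows "x = y \<and> m = r"
proof -
  have "\<forall>j. y$j \<le> x$j \<and> x$j + m$j \<le> y$j + r$j" using face_box_sub[OF assms(1)] assms(3) by blast
  moreover have "\<forall>j. x$j \<le> y$j \<and> y$j + r$j \<le> x$j + m$j" using face_box_sub[OF assms(2)] assms(3) by blast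
  ultimately show ?thesis by (metis antisym add_left_cancel vec_eq_iff)
qed

lemma hull_box:
  assumes m: "\<forall>j. m $ j \<ge> 0"
  shows "convex hull PV (\<lambda>j. {x$j, x$j + m$j}) = face_box x m"
proof
  show "convex hull PV (\<lambda>j. {x$j, x$j + m$j}) \<subseteq> face_box x m"
    unfolding face_box_cbox
  proof (rule hull_minimal)
    show "PV (\<lambda>j. {x$j, x$j + m$j}) \<subseteq> cbox x (x + m)"
    proof
      fix z assume z: "z \<in> PV (\<lambda>j. {x$j, x$j + m$j})"
      show "z \<in> cbox x (x + m)" unfolding mem_box_cart
      proof
        fix i have "z$i = x$i \<or> z$i = x$i + m$i" using z by (auto simp: PV_def)
        then show "x$i \<le> z$i \<and> z$i \<le> (x+m)$i" using m[rule_format, of i] by auto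
      qed
    qed
  qed auto
next
  have ext: "{z. z extreme_point_of face_box x m} \<subseteq> PV (\<lambda>j. {x$j, x$j + m$j})"
  proof
    fix z assume "z \<in> {z. z extreme_point_of face_box x m}"
    then have zE: "z extreme_point_of face_box x m" by simp
    then have zin: "z \<in> face_box x m" by (simp add: extreme_point_of_def)
    show "z \<in> PV (\<lambda>j. {x$j, x$j + m$j})"
    proof (rule ccontr)
      assume "z \<notin> PV (\<lambda>j. {x$j, x$j + m$j})"
      then obtain j where j: "z$j \<noteq> x$j" "z$j \<noteq> x$j + m$j" by (auto simp: PV_def)
      with zin have lt: "x$j < z$j" "z$j < x$j + m$j" by (auto simp: face_box_def less_le)
      define d where "d = min (z$j - x$j) (x$j + m$j - z$j)"
      have d: "d > 0" using lt by (simp add: d_def)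
      define p where "p = z - d *\<^sub>R axis j 1"
      define q where "q = z + d *\<^sub>R axis j 1"
      have "p \<in> face_box x m" "q \<in> face_box x m" using zin d
        by (auto simp: p_def q_def face_box_def d_def axis_def)
      moreover have "z = midpoint p q" by (simp add: p_def q_def midpoint_def vec_eq_iff)
      moreover have "p \<noteq> q" using d by (auto simp: p_def q_def vec_eq_iff axis_def)
      ultimately show False using zE midpoint_in_open_segment[of p q]
        unfolding extreme_point_of_def by metis
    qed
  qed
  have "face_box x m = convex hull {z. z extreme_point_of face_box x m}"
    unfolding face_box_cbox by (rule Krein_Milman_Minkowski) auto
  also have "\<dots> \<subseteq> convex hull PV (\<lambda>j. {x$j, x$j + m$j})" by (rule hull_mono[OF ext])
  finally show "face_box x m \<subseteq> convex hull PV (\<lambda>j. {x$j, x$j + m$j})" .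
qed

lemma PV_image:
  "(\<lambda>z. \<chi> j. g j (z$j)) ` PV S = PV (\<lambda>j. g j ` S j)"
proof
  show "(\<lambda>z. \<chi> j. g j (z$j)) ` PV S \<subseteq> PV (\<lambda>j. g j ` S j)" by (auto simp: PV_def)
next
  show "PV (\<lambda>j. g j ` S j) \<subseteq> (\<lambda>z. \<chi> j. g j (z$j)) ` PV S"
  proof
    fix y assume "y \<in> PV (\<lambda>j. g j ` S j)"
    then have "\<forall>j. \<exists>w. w \<in> S j \<and> g j w = y$j" by (fastforce simp: PV_def image_iff)
    then obtain w where w: "\<forall>j. w j \<in> S j \<and> g j (w j) = y$j" by metis
    have "(\<chi> j. w j) \<in> PV S" using w by (simp add: PV_def)
    moreover have "y = (\<lambda>z. \<chi> j. g j (z$j)) (\<chi> j. w j)" using w by (simp add: vec_eq_iff)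
    ultimately show "y \<in> (\<lambda>z. \<chi> j. g j (z$j)) ` PV S" by blast
  qed
qed

lemma vertices_box:
  assumes A: "A > 0" and x: "x \<in> latt c A" and m: "\<forall>j. m $ j \<in> {0, A}"
  shows "vertices (latt c A) (face_box x m) = PV (\<lambda>j. {x$j, x$j + m$j})"
proof
  show "PV (\<lambda>j. {x$j, x$j + m$j}) \<subseteq> vertices (latt c A) (face_box x m)"
  proof
    fix z assume z: "z \<in> PV (\<lambda>j. {x$j, x$j + m$j})"
    have "z \<in> latt c A"
      unfolding latt_def mem_Collect_eq
    proof
      fix i
      obtain k where k: "x$i = c$i + A * of_int k" using x by (auto simp: latt_def)
      have "z$i = x$i \<or> z$i = x$i + m$i" using z by (auto simp: PV_def)
      moreover have "m$i = 0 \<or> m$i = A" using m by auto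
      ultimately have "z$i = c$i + A * of_int k \<or> z$i = c$i + A * of_int (k+1)"
        using k by (auto simp: algebra_simps)
      then show "\<exists>k::int. z$i = c$i + A * of_int k" by blast
    qed
    moreover have "z \<in> face_box x m" unfolding face_box_def mem_Collect_eq
    proof
      fix j have "z$j = x$j \<or> z$j = x$j + m$j" using z by (auto simp: PV_def)
      moreover have "m$j \<ge> 0" using m A by (metis insert_iff less_eq_real_def singletonD)
      ultimately show "x$j \<le> z$j \<and> z$j \<le> x$j + m$j" by auto
    qed
    ultimately show "z \<in> vertices (latt c A) (face_box x m)" by (simp add: vertices_def)
  qed
next
  show "vertices (latt c A) (face_box x m) \<subseteq> PV (\<lambda>j. {x$j, x$j + m$j})"
  proof
    fix z assume "z \<in> vertices (latt c A) (face_box x m)"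
    then have zl: "z \<in> latt c A" and zb: "z \<in> face_box x m" by (auto simp: vertices_def)
    show "z \<in> PV (\<lambda>j. {x$j, x$j + m$j})"
      unfolding PV_def
    proof (intro CollectI allI)
      fix j
      obtain k where k: "x$j = c$j + A * of_int k" using x by (auto simp: latt_def)
      obtain l where l: "z$j = c$j + A * of_int l" using zl by (auto simp: latt_def)
      have le: "x$j \<le> z$j" "z$j \<le> x$j + m$j" using zb by (auto simp: face_box_def)
      show "z$j \<in> {x$j, x$j + m$j}"
      proof (cases "m$j = 0")
        case True then show ?thesis using le by auto
      next
        case False
        then have mj: "m$j = A" using m by auto
        have "A * of_int k \<le> A * of_int l" "A * of_int l \<le> A * of_int (k+1)"
          using le k l mj by (auto simp: algebra_simps)
        then have "k \<le> l" "l \<le> k + 1" using A by (simp_all add: mult_le_cancel_left_pos)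
        then have "l = k \<or> l = k + 1" by auto
        then show ?thesis using k l mj by (auto simp: algebra_simps)
      qed
    qed
  qed
qed

lemma latt_phi:
  fixes Q e c x :: "real^'n"
  assumes "A \<noteq> 0"
  shows "(2 *\<^sub>R (x - Q) + Q + (A/2) *\<^sub>R e \<in> latt (2 *\<^sub>R c - Q + (A/2) *\<^sub>R e) (2*A))
     \<longleftrightarrow> x \<in> latt c A"
proof -
  have "\<And>i k. (2 * (x$i - Q$i) + Q$i + A/2 * e$i = 2 * c$i - Q$i + A/2 * e$i + 2*A * of_int k)
     \<longleftrightarrow> (x$i = c$i + A * of_int k)" by (auto simp: algebra_simps)
  then show ?thesis by (simp add: latt_def)
qed

lemma latt_image:
  fixes Q e c :: "real^'n"
  assumes "A \<noteq> 0"
  shows "(\<lambda>x. 2 *\<^sub>R (x - Q) + Q + (A/2) *\<^sub>R e) ` latt c A = latt (2 *\<^sub>R c - Q + (A/2) *\<^sub>R e) (2*A)"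
proof
  show "(\<lambda>x. 2 *\<^sub>R (x - Q) + Q + (A/2) *\<^sub>R e) ` latt c A \<subseteq> latt (2 *\<^sub>R c - Q + (A/2) *\<^sub>R e) (2*A)"
    using latt_phi[OF assms] by blast
next
  show "latt (2 *\<^sub>R c - Q + (A/2) *\<^sub>R e) (2*A) \<subseteq> (\<lambda>x. 2 *\<^sub>R (x - Q) + Q + (A/2) *\<^sub>R e) ` latt c A"
  proof
    fix y assume y: "y \<in> latt (2 *\<^sub>R c - Q + (A/2) *\<^sub>R e) (2*A)"
    define x where "x = (1/2) *\<^sub>R (y + Q - (A/2) *\<^sub>R e)"
    have yx: "y = 2 *\<^sub>R (x - Q) + Q + (A/2) *\<^sub>R e" by (simp add: x_def vec_eq_iff algebra_simps)
    then have "x \<in> latt c A" using y latt_phi[OF assms, of x Q e c] by simp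
    then show "y \<in> (\<lambda>x. 2 *\<^sub>R (x - Q) + Q + (A/2) *\<^sub>R e) ` latt c A" using yx by blast
  qed
qed

lemma latt_preimage:
  fixes Q e c' :: "real^'n"
  assumes "A \<noteq> 0" "(\<lambda>x. 2 *\<^sub>R (x - Q) + Q + (A/2) *\<^sub>R e) ` H = latt c' (2*A)"
  shows "\<exists>c. H = latt c A"
proof -
  define c where "c = (1/2) *\<^sub>R (c' + Q - (A/2) *\<^sub>R e)"
  have ceq: "c' = 2 *\<^sub>R c - Q + (A/2) *\<^sub>R e" by (simp add: c_def vec_eq_iff algebra_simps)
  then have eq: "(\<lambda>x. 2 *\<^sub>R (x - Q) + Q + (A/2) *\<^sub>R e) ` H = (\<lambda>x. 2 *\<^sub>R (x - Q) + Q + (A/2) *\<^sub>R e) ` latt c A"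
    using assms(2) latt_image[OF assms(1), of Q e c] ceq by metis
  have "inj (\<lambda>x::real^'n. 2 *\<^sub>R (x - Q) + Q + (A/2) *\<^sub>R e)"
    by (rule injI) (simp add: algebra_simps)
  then have "H = latt c A" using eq by (simp add: inj_image_eq_iff)
  then show ?thesis by blast
qed

lemma scale_succ: "scale lam (t + 1) = 2 * scale lam t"
  by (simp add: scale_def power_int_add_1)

lemma scale_pos: "lam > 0 \<Longrightarrow> scale lam t > 0"
  by (simp add: scale_def)

lemma G_shape:
  fixes G :: "int \<Rightarrow> (real^'n) set"
  assumes lam_pos: "lam > 0"
    and G0: "G 0 = int_lattice lam"
    and G_step: "\<forall>t. G (t + 1) =
        (\<lambda>x. 2 *\<^sub>R (x - Ot t) + Ot t + (scale lam t / 2) *\<^sub>R eps t) ` G t"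
  shows "\<exists>c. G t = latt c (scale lam t)"
proof (induction t rule: int_induct[where k=0])
  case base
  have "G 0 = latt 0 (scale lam 0)" by (simp add: G0 int_lattice_def latt_def scale_def)
  then show ?case by blast
next
  case (step1 i)
  then obtain c where c: "G i = latt c (scale lam i)" by blast
  have "G (i+1) = latt (2 *\<^sub>R c - Ot i + (scale lam i/2) *\<^sub>R eps i) (2 * scale lam i)"
    using G_step c latt_image[of "scale lam i" "Ot i" "eps i" c] scale_pos[OF lam_pos, of i] by (metis less_irrefl)
  then show ?case by (auto simp: scale_succ)
next
  case (step2 i)
  then obtain c where c: "G i = latt c (scale lam i)" by blast
  have "G (i - 1 + 1) = (\<lambda>x. 2 *\<^sub>R (x - Ot (i-1)) + Ot (i-1) + (scale lam (i-1) / 2) *\<^sub>R eps (i-1)) ` G (i-1)"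
    using G_step by blast
  moreover have "scale lam i = 2 * scale lam (i - 1)" using scale_succ[of lam "i-1"] by simp
  ultimately have "(\<lambda>x. 2 *\<^sub>R (x - Ot (i-1)) + Ot (i-1) + (scale lam (i-1) / 2) *\<^sub>R eps (i-1)) ` G (i-1)
     = latt c (2 * scale lam (i-1))" using c by simp
  then show ?case using latt_preimage scale_pos[OF lam_pos] by (metis less_irrefl)
qed

locale setting =
  fixes a :: real and c b :: "real^'n"
  assumes a_pos: "a > 0"
    and hb: "\<forall>i. \<exists>p::int. b$i = c$i + a * (of_int p + 1/2)"
begin

definition Cs :: "'n \<Rightarrow> real set" where
  "Cs j = {w. \<exists>m::int. w = b$j + 2*a* of_int m}"

definition gam :: "'n \<Rightarrow> real \<Rightarrow> real" where
  "gam j z = (if z + a/2 \<in> Cs j then z + a/2 else z - a/2)"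

definition Gam :: "real^'n \<Rightarrow> real^'n" where
  "Gam z = (\<chi> j. gam j (z$j))"

lemma latt_Cs: "latt b (2*a) = PV Cs"
  by (auto simp: latt_def PV_def Cs_def)

lemma Cs_even: "b$j + a * of_int N \<in> Cs j \<longleftrightarrow> even N"
proof
  assume "b$j + a * of_int N \<in> Cs j"
  then obtain m :: int where "b$j + a * of_int N = b$j + 2*a* of_int m" by (auto simp: Cs_def)
  then have "a * of_int N = a * of_int (2*m)" by simp
  then have "N = 2*m" using a_pos by simp
  then show "even N" by simp
next
  assume "even N"
  then obtain m where "N = 2*m" by blast
  then show "b$j + a * of_int N \<in> Cs j" by (auto simp: Cs_def)
qed

lemma fine_coord:
  assumes "z = c$j + a * of_int n"
  obtains p :: int where "z + a/2 = b$j + a * of_int (n - p)" "z - a/2 = b$j + a * of_int (n - p - 1)"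
proof -
  obtain p :: int where p: "b$j = c$j + a * (of_int p + 1/2)" using hb by blast
  show ?thesis by (rule that[of p]) (simp_all add: assms p algebra_simps)
qed

lemma gam_cases:
  assumes "z = c$j + a * of_int n"
  shows "(gam j z = z + a/2 \<and> z + a/2 \<in> Cs j \<and> z - a/2 + 2*a \<notin> Cs j \<and> z - a/2 \<notin> Cs j) \<or>
         (gam j z = z - a/2 \<and> z - a/2 \<in> Cs j \<and> z + a/2 \<notin> Cs j)"
proof -
  obtain p :: int where p: "z + a/2 = b$j + a * of_int (n - p)" "z - a/2 = b$j + a * of_int (n - p - 1)"
    using fine_coord[OF assms] by blast
  have q: "z - a/2 + 2*a = b$j + a * of_int (n - p + 1)" using p(2) by (simp add: algebra_simps)
  show ?thesis
  proof (cases "even (n - p)")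
    case True
    then have "odd (n - p + 1)" by simp
    then have n1: "z - a/2 + 2*a \<notin> Cs j" unfolding q Cs_even .
    have "odd (n - p - 1)" using True by simp
    then have n2: "z - a/2 \<notin> Cs j" unfolding p(2) Cs_even .
    have i1: "z + a/2 \<in> Cs j" unfolding p(1) Cs_even using True .
    then have "gam j z = z + a/2" unfolding gam_def by simp
    then show ?thesis using n1 i1 n2 by blast
  next
    case False
    then have "even (n - p - 1)" by simp
    then have i1: "z - a/2 \<in> Cs j" unfolding p(2) Cs_even .
    have n1: "z + a/2 \<notin> Cs j" unfolding p(1) Cs_even using False .
    then have "gam j z = z - a/2" unfolding gam_def by simp
    then show ?thesis using n1 i1 by blast
  qed
qed

lemma gam_in: "z = c$j + a * of_int n \<Longrightarrow> gam j z \<in> Cs j"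
proof -
  assume "z = c$j + a * of_int n"
  from gam_cases[OF this] show ?thesis by auto
qed

lemma gam_dist: "z = c$j + a * of_int n \<Longrightarrow> (z - gam j z)^2 = (a/2)^2"
proof -
  assume "z = c$j + a * of_int n"
  from gam_cases[OF this] have "gam j z = z + a/2 \<or> gam j z = z - a/2" by auto
  then show ?thesis by (auto simp: power2_eq_square)
qed

lemma Cs_dist:
  assumes z: "z = c$j + a * of_int n" and w: "w \<in> Cs j"
  shows "(z - w)^2 \<ge> (a/2)^2" and "w \<noteq> gam j z \<Longrightarrow> (z - w)^2 > (a/2)^2"
proof -
  obtain p :: int where p: "z + a/2 = b$j + a * of_int (n - p)" "z - a/2 = b$j + a * of_int (n - p - 1)"
    using fine_coord[OF z] by blast
  obtain m :: int where m: "w = b$j + 2*a* of_int m" using w by (auto simp: Cs_def)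
  define t where "t = n - p - 2*m"
  have zw: "z - w = a * (of_int t - 1/2)" using p(1) m by (simp add: t_def algebra_simps)
  have sq: "(z - w)^2 = a^2 * (of_int t - 1/2)^2" by (simp add: zw power_mult_distrib)
  have t1: "(of_int t - 1/2::real)^2 \<ge> 1/4"
  proof (cases "t \<le> 0")
    case True then have "(of_int t::real) \<le> 0" by simp
    then have "1/2 \<le> 1/2 - (of_int t::real)" by simp
    then have "(1/2)^2 \<le> (1/2 - (of_int t::real))^2" by (rule power_mono) simp
    then show ?thesis by (simp add: power2_commute power_divide)
  next
    case False then have "(of_int t::real) \<ge> 1" by simp
    then have "1/2 \<le> (of_int t::real) - 1/2" by simp
    then have "(1/2)^2 \<le> ((of_int t::real) - 1/2)^2" by (rule power_mono) simp
    then show ?thesis by (simp add: power2_eq_square)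
  qed
  show "(z - w)^2 \<ge> (a/2)^2" using t1 a_pos unfolding sq
    by (simp add: power_divide)
  assume ne: "w \<noteq> gam j z"
  have "t \<noteq> 0 \<and> t \<noteq> 1"
  proof
    show "t \<noteq> 0"
    proof
      assume "t = 0"
      then have "w = z + a/2" using zw by simp
      from gam_cases[OF z] show False using ne w \<open>w = z + a/2\<close> by auto
    qed
    show "t \<noteq> 1"
    proof
      assume "t = 1"
      then have "w = z - a/2" using zw by simp
      from gam_cases[OF z] show False using ne w \<open>w = z - a/2\<close> by auto
    qed
  qed
  then have "t \<le> -1 \<or> t \<ge> 2" by auto
  then have t2: "(of_int t - 1/2::real)^2 > 1/4"
  proof
    assume "t \<le> -1" then have "(of_int t::real) \<le> -1" by simp
    then have "1 < 1/2 - (of_int t::real)" by simp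
    then have "1^2 < (1/2 - (of_int t::real))^2" by (rule power_strict_mono) simp_all
    then show ?thesis by (simp add: power2_commute power_divide)
  next
    assume "t \<ge> 2" then have "(of_int t::real) \<ge> 2" by simp
    then have "1 < (of_int t::real) - 1/2" by simp
    then have "1^2 < ((of_int t::real) - 1/2)^2" by (rule power_strict_mono) simp_all
    then show ?thesis by simp
  qed
  show "(z - w)^2 > (a/2)^2" using t2 a_pos unfolding sq
    by (simp add: power_divide)
qed

lemma latt_coord: "x \<in> latt c A \<Longrightarrow> \<exists>n::int. x$i = c$i + A * of_int n"
  by (auto simp: latt_def)

lemma Gam_in: "x \<in> latt c a \<Longrightarrow> Gam x \<in> latt b (2*a)"
  unfolding latt_Cs PV_def Gam_def using gam_in latt_coord by fastforce

lemma dist_sq: "dist (x::real^'n) y = sqrt (\<Sum>i\<in>UNIV. (x$i - y$i)^2)"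
  by (simp add: dist_vec_def L2_set_def dist_real_def)

lemma dist_Gam:
  assumes x: "x \<in> latt c a" and y: "y \<in> latt b (2*a)"
  shows "dist x (Gam x) \<le> dist x y" and "y \<noteq> Gam x \<Longrightarrow> dist x (Gam x) < dist x y"
proof -
  have c1: "(x$i - Gam x$i)^2 \<le> (x$i - y$i)^2" for i
  proof -
    obtain n where n: "x$i = c$i + a * of_int n" using latt_coord[OF x] by blast
    have "y$i \<in> Cs i" using y by (simp add: latt_Cs PV_def)
    then show ?thesis using gam_dist[OF n] Cs_dist(1)[OF n] by (simp add: Gam_def)
  qed
  then show "dist x (Gam x) \<le> dist x y" unfolding dist_sq
    by (intro real_sqrt_le_mono sum_mono) auto
  assume ne: "y \<noteq> Gam x"
  then obtain i where i: "y$i \<noteq> Gam x$i" by (auto simp: vec_eq_iff)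
  have c2: "(x$i - Gam x$i)^2 < (x$i - y$i)^2"
  proof -
    obtain n where n: "x$i = c$i + a * of_int n" using latt_coord[OF x] by blast
    have "y$i \<in> Cs i" using y by (simp add: latt_Cs PV_def)
    then show ?thesis using gam_dist[OF n] Cs_dist(2)[OF n] i by (simp add: Gam_def)
  qed
  show "dist x (Gam x) < dist x y" unfolding dist_sq
    by (intro real_sqrt_less_mono sum_strict_mono_ex1) (use c1 c2 in auto)
qed

lemma gvert_eq:
  assumes x: "x \<in> latt c a"
  shows "gvert (latt b (2*a)) x = Gam x"
  unfolding gvert_def
proof (rule the_equality)
  show "Gam x \<in> latt b (2*a) \<and> x \<in> Vor (latt b (2*a)) (Gam x)"
    using Gam_in[OF x] dist_Gam(1)[OF x] by (auto simp: Vor_def)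
next
  fix y assume h: "y \<in> latt b (2*a) \<and> x \<in> Vor (latt b (2*a)) y"
  show "y = Gam x"
  proof (rule ccontr)
    assume "y \<noteq> Gam x"
    then have "dist x (Gam x) < dist x y" using dist_Gam(2)[OF x] h by blast
    moreover have "dist x y \<le> dist x (Gam x)" using h Gam_in[OF x] by (auto simp: Vor_def)
    ultimately show False by simp
  qed
qed

lemma gam_succ:
  assumes z: "z = c$j + a * of_int n"
  shows "gam j (z + a) = gam j z \<or> (gam j (z + a) = gam j z + 2*a)"
proof -
  have z1: "z + a = c$j + a * of_int (n+1)" using z by (simp add: algebra_simps)
  from gam_cases[OF z] show ?thesis
  proof
    assume h: "gam j z = z + a/2 \<and> z + a/2 \<in> Cs j \<and> z - a/2 + 2*a \<notin> Cs j \<and> z - a/2 \<notin> Cs j"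
    have "z + a + a/2 = z - a/2 + 2*a" by simp
    then have "gam j (z+a) = z + a - a/2" using h unfolding gam_def by simp
    then show ?thesis using h by simp
  next
    assume h: "gam j z = z - a/2 \<and> z - a/2 \<in> Cs j \<and> z + a/2 \<notin> Cs j"
    from gam_cases[OF z1] show ?thesis
    proof
      assume "gam j (z + a) = z + a + a/2 \<and> z + a + a/2 \<in> Cs j \<and> z + a - a/2 + 2*a \<notin> Cs j \<and> z + a - a/2 \<notin> Cs j"
      then show ?thesis using h by auto
    next
      assume h2: "gam j (z + a) = z + a - a/2 \<and> z + a - a/2 \<in> Cs j \<and> z + a + a/2 \<notin> Cs j"
      have e: "z + a - a/2 = z + a/2" by simp
      have "z + a/2 \<in> Cs j" using h2 e by metis
      then show ?thesis using h by blast
    qed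
  qed
qed

lemma Cs_between:
  assumes "w1 \<in> Cs j" "w2 \<in> Cs j" "w1 \<le> w2" "w2 \<le> w1 + 2*a"
  shows "w2 = w1 \<or> w2 = w1 + 2*a"
proof -
  obtain m1 :: int where m1: "w1 = b$j + 2*a * of_int m1" using assms(1) by (auto simp: Cs_def)
  obtain m2 :: int where m2: "w2 = b$j + 2*a * of_int m2" using assms(2) by (auto simp: Cs_def)
  have "2*a * of_int m1 \<le> 2*a * of_int m2" "2*a * of_int m2 \<le> 2*a * of_int (m1 + 1)"
    using assms m1 m2 by (simp_all add: algebra_simps)
  then have "m1 \<le> m2" "m2 \<le> m1 + 1" using a_pos by (simp_all add: mult_le_cancel_left_pos)
  then have "m2 = m1 \<or> m2 = m1 + 1" by auto
  then show ?thesis using m1 m2 by (auto simp: algebra_simps)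
qed

lemma Gam_nth [simp]: "Gam z $ j = gam j (z$j)"
  by (simp add: Gam_def)

lemma mprime:
  assumes x: "x \<in> latt c a" and m: "\<forall>j. m$j \<in> {0, a}"
  shows "(gam j (x$j + m$j) = gam j (x$j)) \<or> (m$j = a \<and> gam j (x$j + m$j) = gam j (x$j) + 2*a)"
proof -
  obtain n where n: "x$j = c$j + a * of_int n" using latt_coord[OF x] by blast
  have "m$j = 0 \<or> m$j = a" using m by auto
  then show ?thesis using gam_succ[OF n] by auto
qed

lemma gvert_img:
  assumes z: "z \<in> latt c a" and q: "\<forall>j. q$j \<in> {0, a}"
    and im: "\<forall>j. gam j ` {z$j, z$j + q$j} = {y$j, y$j + r$j}"
  shows "gvert (latt b (2*a)) ` vertices (latt c a) (face_box z q) = PV (\<lambda>j. {y$j, y$j + r$j})"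
proof -
  have V: "vertices (latt c a) (face_box z q) = PV (\<lambda>j. {z$j, z$j + q$j})"
    by (rule vertices_box[OF a_pos z q])
  have "gvert (latt b (2*a)) ` vertices (latt c a) (face_box z q) = Gam ` vertices (latt c a) (face_box z q)"
    by (rule image_cong) (auto simp: vertices_def gvert_eq)
  also have "\<dots> = PV (\<lambda>j. gam j ` {z$j, z$j + q$j})"
    unfolding V Gam_def by (rule PV_image)
  finally show ?thesis using im by simp
qed

lemma gface_img:
  assumes z: "z \<in> latt c a" and q: "\<forall>j. q$j \<in> {0, a}" and r: "\<forall>j. r$j \<ge> 0"
    and im: "\<forall>j. gam j ` {z$j, z$j + q$j} = {y$j, y$j + r$j}"
  shows "gface (latt c a) (latt b (2*a)) (face_box z q) = face_box y r"
  unfolding gface_def gvert_img[OF z q im] using hull_box[OF r] .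

lemma pullback:
  assumes x: "x \<in> latt c a" and m: "\<forall>j. m$j \<in> {0, a}"
    and y: "y \<in> latt b (2*a)" and r: "\<forall>j. r$j \<in> {0, 2*a}"
    and sub: "face_box y r \<subseteq> face_box (Gam x) (Gam (x+m) - Gam x)"
  defines "z \<equiv> (\<chi> j. if r$j = (Gam (x+m) - Gam x)$j \<or> y$j = Gam x$j then x$j else x$j + m$j)"
    and "q \<equiv> (\<chi> j. if r$j = (Gam (x+m) - Gam x)$j then m$j else 0)"
  shows "z \<in> latt c a" "\<forall>j. q$j \<in> {0, a}" "face_box z q \<subseteq> face_box x m"
    "\<forall>j. gam j ` {z$j, z$j + q$j} = {y$j, y$j + r$j}"
    "gface (latt c a) (latt b (2*a)) (face_box z q) = face_box y r"
proof -
  have r0: "\<forall>j. r$j \<ge> 0" using r a_pos by (metis empty_iff insert_iff less_eq_real_def mult_pos_pos zero_less_numeral)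
  have ineq: "\<forall>j. gam j (x$j) \<le> y$j \<and> y$j + r$j \<le> gam j (x$j + m$j)"
    using sub face_box_sub[OF r0] by simp
  show zl: "z \<in> latt c a" unfolding latt_def mem_Collect_eq
  proof
    fix i
    obtain n where n: "x$i = c$i + a * of_int n" using latt_coord[OF x] by blast
    have "m$i = 0 \<or> m$i = a" using m by auto
    then have "z$i = c$i + a * of_int n \<or> z$i = c$i + a * of_int (n+1)"
      using n by (auto simp: z_def algebra_simps)
    then show "\<exists>k::int. z$i = c$i + a * of_int k" by blast
  qed
  show qa: "\<forall>j. q$j \<in> {0, a}" using m by (simp add: q_def)
  have m0: "\<forall>j. m$j \<ge> 0" using m a_pos by (metis empty_iff insert_iff less_eq_real_def)
  have "\<forall>j. x$j \<le> z$j \<and> z$j + q$j \<le> x$j + m$j"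
    using m0 by (simp add: z_def q_def)
  moreover have "\<forall>j. q$j \<ge> 0" using m0 by (simp add: q_def)
  ultimately show "face_box z q \<subseteq> face_box x m"
    using face_box_sub[of q z x m] by blast
  show im: "\<forall>j. gam j ` {z$j, z$j + q$j} = {y$j, y$j + r$j}"
  proof
    fix j
    show "gam j ` {z$j, z$j + q$j} = {y$j, y$j + r$j}"
    proof (cases "r$j = gam j (x$j + m$j) - gam j (x$j)")
      case True
      then have "y$j = gam j (x$j)" using ineq[rule_format, of j] r0[rule_format, of j] by linarith
      then show ?thesis using True by (simp add: z_def q_def)
    next
      case False
      have rle: "r$j \<le> gam j (x$j + m$j) - gam j (x$j)" using ineq[rule_format, of j] by linarith
      have rj': "r$j = 0 \<or> r$j = 2*a" using r by auto
      from mprime[OF x m, of j] have mj: "m$j = a" and g2: "gam j (x$j + m$j) = gam j (x$j) + 2*a"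
        using rle False r0[rule_format, of j] by auto
      have rj: "r$j = 0" using rj' False g2 by auto
      have q0: "q$j = 0" using False by (simp add: q_def)
      obtain n where n: "x$j = c$j + a * of_int n" using latt_coord[OF x] by blast
      have "y$j \<in> Cs j" using y by (simp add: latt_Cs PV_def)
      then have "y$j = gam j (x$j) \<or> y$j = gam j (x$j) + 2*a"
        using Cs_between[OF gam_in[OF n], of "y$j"] ineq[rule_format, of j] g2 r0[rule_format, of j] by simp
      then show ?thesis
      proof
        assume "y$j = gam j (x$j)"
        then show ?thesis using rj q0 by (simp add: z_def)
      next
        assume h: "y$j = gam j (x$j) + 2*a"
        then have "y$j \<noteq> gam j (x$j)" using a_pos by simp
        then have "z$j = x$j + m$j" using False by (simp add: z_def)
        then show ?thesis using rj q0 g2 h by simp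
      qed
    qed
  qed
  show "gface (latt c a) (latt b (2*a)) (face_box z q) = face_box y r"
    by (rule gface_img[OF zl qa r0 im])
qed

lemma one_coord:
  assumes mp: "\<forall>j. mp$j \<in> {0, 2*a}" and r: "\<forall>j. r$j \<in> {0, 2*a}"
    and sub: "face_box y r \<subseteq> face_box xp mp"
    and cd: "card {j. mp$j \<noteq> 0} = Suc (card {j. r$j \<noteq> 0})"
  shows "\<exists>j0. mp$j0 = 2*a \<and> r$j0 = 0 \<and> (\<forall>j. j \<noteq> j0 \<longrightarrow> r$j = mp$j \<and> y$j = xp$j)"
proof -
  have r0: "\<forall>j. r$j \<ge> 0" using r a_pos by (metis empty_iff insert_iff less_eq_real_def mult_pos_pos zero_less_numeral)
  have ineq: "\<forall>j. xp$j \<le> y$j \<and> y$j + r$j \<le> xp$j + mp$j"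
    using sub face_box_sub[OF r0] by simp
  have rle: "\<forall>j. r$j \<le> mp$j"
  proof
    fix j show "r$j \<le> mp$j" using ineq[rule_format, of j] by linarith
  qed
  define N where "N = {j. mp$j \<noteq> 0}"
  define R where "R = {j. r$j \<noteq> 0}"
  have RN: "R \<subseteq> N"
  proof
    fix j assume "j \<in> R"
    then have "r$j \<noteq> 0" by (simp add: R_def)
    then have "r$j = 2*a" using r by auto
    then have "mp$j \<noteq> 0" using rle[rule_format, of j] a_pos by auto
    then show "j \<in> N" by (simp add: N_def)
  qed
  have "card (N - R) = card N - card R" using RN by (simp add: card_Diff_subset)
  also have "\<dots> = 1" using cd by (simp add: N_def R_def)
  finally obtain j0 where j0: "N - R = {j0}" using card_1_singletonE by blast
  have "mp$j0 \<noteq> 0" "r$j0 = 0" using j0 by (auto simp: N_def R_def)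
  then have "mp$j0 = 2*a" using mp by auto
  moreover have "\<forall>j. j \<noteq> j0 \<longrightarrow> r$j = mp$j \<and> y$j = xp$j"
  proof (intro allI impI)
    fix j assume "j \<noteq> j0"
    then have nj: "j \<notin> N - R" using j0 by auto
    have "r$j = mp$j"
    proof (cases "mp$j = 0")
      case True then show ?thesis using rle[rule_format, of j] r0[rule_format, of j] by simp
    next
      case False
      then have "j \<in> R" using nj by (simp add: N_def)
      then have "r$j \<noteq> 0" by (simp add: R_def)
      then have "r$j = 2*a" using r by auto
      moreover have "mp$j = 2*a" using mp False by auto
      ultimately show ?thesis by simp
    qed
    then show "r$j = mp$j \<and> y$j = xp$j" using ineq[rule_format, of j] by simp
  qed
  ultimately show ?thesis using \<open>r$j0 = 0\<close> by blast
qed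

lemma is_face_intro: "x \<in> G \<Longrightarrow> \<forall>j. m$j \<in> {0, A} \<Longrightarrow> is_face G A (face_box x m)"
  by (auto simp: is_face_def is_kface_def)

theorem main:
  assumes f_face: "is_kface (latt c a) a k f"
  shows "\<exists>e. is_face (latt b (2*a)) (2*a) e \<and>
           gvert (latt b (2*a)) ` vertices (latt c a) f = vertices (latt b (2*a)) e \<and>
           (\<forall>e1. is_face (latt b (2*a)) (2*a) e1 \<and> e1 \<subseteq> e \<longrightarrow>
              (\<exists>f1. is_face (latt c a) a f1 \<and> f1 \<subseteq> f \<and>
                     gface (latt c a) (latt b (2*a)) f1 = e1)) \<and>
           (\<forall>e1 e2. is_facet (latt b (2*a)) (2*a) e e1 \<and>
                    is_facet (latt b (2*a)) (2*a) e e2 \<and> e1 \<inter> e2 = {} \<longrightarrow>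
              (\<exists>f1 f2. is_facet (latt c a) a f f1 \<and> is_facet (latt c a) a f f2 \<and>
                       f1 \<inter> f2 = {} \<and>
                       gface (latt c a) (latt b (2*a)) f1 = e1 \<and> gface (latt c a) (latt b (2*a)) f2 = e2))"
proof -
  obtain x m where x: "x \<in> latt c a" and m: "\<forall>j. m$j \<in> {0, a}"
    and mk: "card {j. m$j \<noteq> 0} = k" and fdef: "f = face_box x m"
    using f_face by (auto simp: is_kface_def)
  define xp where "xp = Gam x"
  define mp where "mp = Gam (x+m) - Gam x"
  have mpj: "\<forall>j. mp$j = 0 \<or> (m$j = a \<and> mp$j = 2*a)"
  proof
    fix j
    from mprime[OF x m, of j] show "mp$j = 0 \<or> (m$j = a \<and> mp$j = 2*a)"
      by (auto simp: mp_def)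
  qed
  have mp2: "\<forall>j. mp$j \<in> {0, 2*a}" using mpj by auto
  have mp0: "\<forall>j. mp$j \<ge> 0" using mpj a_pos by (metis less_eq_real_def mult_pos_pos zero_less_numeral)
  have xpl: "xp \<in> latt b (2*a)" using Gam_in[OF x] by (simp add: xp_def)
  define e where "e = face_box xp mp"
  have eface: "is_face (latt b (2*a)) (2*a) e" unfolding e_def by (rule is_face_intro[OF xpl mp2])
  have imx: "\<forall>j. gam j ` {x$j, x$j + m$j} = {xp$j, xp$j + mp$j}" by (simp add: xp_def mp_def)
  have vert: "gvert (latt b (2*a)) ` vertices (latt c a) f = vertices (latt b (2*a)) e"
    unfolding fdef e_def gvert_img[OF x m imx]
    using vertices_box[of "2*a" xp b mp] a_pos xpl mp2 by simp
  have part2: "\<forall>e1. is_face (latt b (2*a)) (2*a) e1 \<and> e1 \<subseteq> e \<longrightarrow>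
              (\<exists>f1. is_face (latt c a) a f1 \<and> f1 \<subseteq> f \<and>
                     gface (latt c a) (latt b (2*a)) f1 = e1)"
  proof (intro allI impI)
    fix e1 assume h: "is_face (latt b (2*a)) (2*a) e1 \<and> e1 \<subseteq> e"
    then obtain y r where y: "y \<in> latt b (2*a)" and r: "\<forall>j. r$j \<in> {0, 2*a}" and e1: "e1 = face_box y r"
      by (auto simp: is_face_def is_kface_def)
    have sub: "face_box y r \<subseteq> face_box (Gam x) (Gam (x+m) - Gam x)"
      using h e1 by (simp add: e_def xp_def mp_def)
    note pb = pullback[OF x m y r sub]
    show "\<exists>f1. is_face (latt c a) a f1 \<and> f1 \<subseteq> f \<and> gface (latt c a) (latt b (2*a)) f1 = e1"
      using is_face_intro[OF pb(1) pb(2)] pb(3) pb(5) e1 fdef by blast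
  qed
  have part3: "\<forall>e1 e2. is_facet (latt b (2*a)) (2*a) e e1 \<and>
                    is_facet (latt b (2*a)) (2*a) e e2 \<and> e1 \<inter> e2 = {} \<longrightarrow>
              (\<exists>f1 f2. is_facet (latt c a) a f f1 \<and> is_facet (latt c a) a f f2 \<and>
                       f1 \<inter> f2 = {} \<and>
                       gface (latt c a) (latt b (2*a)) f1 = e1 \<and> gface (latt c a) (latt b (2*a)) f2 = e2)"
  proof (intro allI impI)
    fix e1 e2
    assume H: "is_facet (latt b (2*a)) (2*a) e e1 \<and> is_facet (latt b (2*a)) (2*a) e e2 \<and> e1 \<inter> e2 = {}"
    have facet_data: "\<exists>y r. y \<in> latt b (2*a) \<and> (\<forall>j. r$j \<in> {0, 2*a}) \<and> e' = face_box y r \<and>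
         face_box y r \<subseteq> e \<and> card {j. mp$j \<noteq> 0} = Suc (card {j. r$j \<noteq> 0})"
      if fe: "is_facet (latt b (2*a)) (2*a) e e'" for e'
    proof -
      obtain k1 where k1: "is_kface (latt b (2*a)) (2*a) (Suc k1) e" "is_kface (latt b (2*a)) (2*a) k1 e'" "e' \<subseteq> e"
        using fe by (auto simp: is_facet_def)
      obtain x2 m2 where m2: "\<forall>j. m2$j \<in> {0, 2*a}" "card {j. m2$j \<noteq> 0} = Suc k1" "e = face_box x2 m2"
        using k1(1) by (auto simp: is_kface_def)
      have "\<forall>j. m2$j \<ge> 0" using m2(1) a_pos by (metis empty_iff insert_iff less_eq_real_def mult_pos_pos zero_less_numeral)
      then have "m2 = mp" using face_box_eq[OF _ mp0, of m2 x2 xp] m2(3) by (simp add: e_def)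
      then have cN: "card {j. mp$j \<noteq> 0} = Suc k1" using m2(2) by simp
      obtain y r where "y \<in> latt b (2*a)" "\<forall>j. r$j \<in> {0, 2*a}" "card {j. r$j \<noteq> 0} = k1" "e' = face_box y r"
        using k1(2) by (auto simp: is_kface_def)
      then show ?thesis using cN k1(3) by blast
    qed
    obtain y1 r1 where y1: "y1 \<in> latt b (2*a)" and r1: "\<forall>j. r1$j \<in> {0, 2*a}" and e1: "e1 = face_box y1 r1"
      and s1: "face_box y1 r1 \<subseteq> e" and c1: "card {j. mp$j \<noteq> 0} = Suc (card {j. r1$j \<noteq> 0})"
      using facet_data H by blast
    obtain y2 r2 where y2: "y2 \<in> latt b (2*a)" and r2: "\<forall>j. r2$j \<in> {0, 2*a}" and e2: "e2 = face_box y2 r2"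
      and s2: "face_box y2 r2 \<subseteq> e" and c2: "card {j. mp$j \<noteq> 0} = Suc (card {j. r2$j \<noteq> 0})"
      using facet_data H by blast
    obtain j1 where j1: "mp$j1 = 2*a" "r1$j1 = 0" "\<forall>j. j \<noteq> j1 \<longrightarrow> r1$j = mp$j \<and> y1$j = xp$j"
      using one_coord[OF mp2 r1 s1[unfolded e_def] c1] by blast
    obtain j2 where j2: "mp$j2 = 2*a" "r2$j2 = 0" "\<forall>j. j \<noteq> j2 \<longrightarrow> r2$j = mp$j \<and> y2$j = xp$j"
      using one_coord[OF mp2 r2 s2[unfolded e_def] c2] by blast
    have r10: "\<forall>j. r1$j \<ge> 0" using r1 a_pos by (metis empty_iff insert_iff less_eq_real_def mult_pos_pos zero_less_numeral)
    have r20: "\<forall>j. r2$j \<ge> 0" using r2 a_pos by (metis empty_iff insert_iff less_eq_real_def mult_pos_pos zero_less_numeral)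
    have in1: "\<forall>j. xp$j \<le> y1$j \<and> y1$j + r1$j \<le> xp$j + mp$j"
      using s1 face_box_sub[OF r10] by (simp add: e_def)
    have in2: "\<forall>j. xp$j \<le> y2$j \<and> y2$j + r2$j \<le> xp$j + mp$j"
      using s2 face_box_sub[OF r20] by (simp add: e_def)
    have jj: "j1 = j2"
    proof (rule ccontr)
      assume ne: "j1 \<noteq> j2"
      define w where "w = (\<chi> j. if j = j1 then y1$j else if j = j2 then y2$j else xp$j)"
      have "w \<in> e1" unfolding e1 face_box_def mem_Collect_eq
      proof
        fix j show "y1$j \<le> w$j \<and> w$j \<le> y1$j + r1$j"
          using ne j1(3)[rule_format, of j] in2[rule_format, of j] r10[rule_format, of j] r20[rule_format, of j]
          by (auto simp: w_def)
      qed
      moreover have "w \<in> e2" unfolding e2 face_box_def mem_Collect_eq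
      proof
        fix j show "y2$j \<le> w$j \<and> w$j \<le> y2$j + r2$j"
          using ne j2(3)[rule_format, of j] in1[rule_format, of j] r10[rule_format, of j] r20[rule_format, of j]
          by (auto simp: w_def)
      qed
      ultimately show False using H by blast
    qed
    have yne: "y1$j1 \<noteq> y2$j1"
    proof
      assume eq: "y1$j1 = y2$j1"
      have "y1 = y2" using eq j1(3) j2(3) jj by (metis vec_eq_iff)
      moreover have "r1 = r2" using j1 j2 jj by (metis vec_eq_iff)
      ultimately have "e1 = e2" using e1 e2 by simp
      moreover have "y1 \<in> e1" using e1 r10 by (simp add: face_box_def)
      ultimately show False using H by blast
    qed
    have sub1: "face_box y1 r1 \<subseteq> face_box (Gam x) (Gam (x+m) - Gam x)"
      using s1 by (simp add: e_def xp_def mp_def)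
    have sub2: "face_box y2 r2 \<subseteq> face_box (Gam x) (Gam (x+m) - Gam x)"
      using s2 by (simp add: e_def xp_def mp_def)
    note pb1 = pullback[OF x m y1 r1 sub1]
    note pb2 = pullback[OF x m y2 r2 sub2]
    define z1 where "z1 = (\<chi> j. if r1$j = (Gam (x+m) - Gam x)$j \<or> y1$j = Gam x$j then x$j else x$j + m$j)"
    define q1 where "q1 = (\<chi> j. if r1$j = (Gam (x+m) - Gam x)$j then m$j else 0)"
    define z2 where "z2 = (\<chi> j. if r2$j = (Gam (x+m) - Gam x)$j \<or> y2$j = Gam x$j then x$j else x$j + m$j)"
    define q2 where "q2 = (\<chi> j. if r2$j = (Gam (x+m) - Gam x)$j then m$j else 0)"
    note pb1 = pb1[folded z1_def q1_def]
    note pb2 = pb2[folded z2_def q2_def]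
    have mj1: "m$j1 = a" using mpj j1(1) a_pos by (metis mult_eq_0_iff zero_neq_numeral less_irrefl)
    have "mp$j1 \<noteq> 0" using j1(1) a_pos by simp
    have q1j: "q1$j1 = 0" "\<forall>j. j \<noteq> j1 \<longrightarrow> q1$j = m$j"
      using j1 a_pos by (auto simp: q1_def mp_def)
    have q2j: "q2$j1 = 0" "\<forall>j. j \<noteq> j1 \<longrightarrow> q2$j = m$j"
      using j2 jj a_pos by (auto simp: q2_def mp_def)
    have Q1: "{j. q1$j \<noteq> 0} = {j. m$j \<noteq> 0} - {j1}" using q1j by auto
    have Q2: "{j. q2$j \<noteq> 0} = {j. m$j \<noteq> 0} - {j1}" using q2j by auto
    have j1M: "j1 \<in> {j. m$j \<noteq> 0}" using mj1 a_pos by simp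
    have cardM: "card {j. m$j \<noteq> 0} = Suc (card ({j. m$j \<noteq> 0} - {j1}))"
      using card_Suc_Diff1[OF _ j1M] by simp
    have fK: "is_kface (latt c a) a (Suc (card ({j. m$j \<noteq> 0} - {j1}))) f"
      using x m cardM fdef by (auto simp: is_kface_def)
    have "is_kface (latt c a) a (card ({j. m$j \<noteq> 0} - {j1})) (face_box z1 q1)"
      unfolding is_kface_def using pb1(1,2) Q1 by (metis (no_types, lifting))
    then have F1: "is_facet (latt c a) a f (face_box z1 q1)"
      unfolding is_facet_def using fK pb1(3) fdef by blast
    have "is_kface (latt c a) a (card ({j. m$j \<noteq> 0} - {j1})) (face_box z2 q2)"
      unfolding is_kface_def using pb2(1,2) Q2 by (metis (no_types, lifting))
    then have F2: "is_facet (latt c a) a f (face_box z2 q2)"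
      unfolding is_facet_def using fK pb2(3) fdef by blast
    have disj: "face_box z1 q1 \<inter> face_box z2 q2 = {}"
    proof (rule ccontr)
      assume "face_box z1 q1 \<inter> face_box z2 q2 \<noteq> {}"
      then obtain w where w1: "w \<in> face_box z1 q1" and w2: "w \<in> face_box z2 q2" by blast
      have "z1$j1 \<le> w$j1 \<and> w$j1 \<le> z1$j1 + q1$j1" using w1 by (simp add: face_box_def)
      then have "w$j1 = z1$j1" using q1j(1) by simp
      moreover have "z2$j1 \<le> w$j1 \<and> w$j1 \<le> z2$j1 + q2$j1" using w2 by (simp add: face_box_def)
      moreover have "w$j1 = z2$j1" using calculation(2) q2j(1) by simp
      ultimately have zz: "z1$j1 = z2$j1" by (metis (no_types))
      have "{gam j1 (z1$j1)} = {y1$j1}" using pb1(4)[rule_format, of j1] q1j j1(2) by simp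
      moreover have "{gam j1 (z2$j1)} = {y2$j1}" using pb2(4)[rule_format, of j1] q2j j2(2) jj by simp
      ultimately show False using zz yne by simp
    qed
    show "\<exists>f1 f2. is_facet (latt c a) a f f1 \<and> is_facet (latt c a) a f f2 \<and>
                       f1 \<inter> f2 = {} \<and>
                       gface (latt c a) (latt b (2*a)) f1 = e1 \<and> gface (latt c a) (latt b (2*a)) f2 = e2"
      using F1 F2 disj pb1(5) pb2(5) e1 e2 by blast
  qed
  show ?thesis using eface vert part2 part3 by blast
qed

end

theorem lemma4:
  fixes lam :: real
    and G :: "int \<Rightarrow> (real^'n) set"
    and Ot :: "int \<Rightarrow> real^'n"
    and eps :: "int \<Rightarrow> real^'n"
    and s :: int and k :: nat and f :: "(real^'n) set"
  assumes lam_pos: "lam > 0"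
    and G0: "G 0 = int_lattice lam"
    and O_mem: "\<forall>t. Ot t \<in> G t"
    and eps_sign: "\<forall>t j. eps t $ j \<in> {-1, 1}"
    and G_step: "\<forall>t. G (t + 1) =
        (\<lambda>x. 2 *\<^sub>R (x - Ot t) + Ot t + (scale lam t / 2) *\<^sub>R eps t) ` G t"
    and f_face: "is_kface (G s) (scale lam s) k f"
  shows "\<exists>e. is_face (G (s + 1)) (scale lam (s + 1)) e \<and>
           gvert (G (s + 1)) ` vertices (G s) f = vertices (G (s + 1)) e \<and>
           (\<forall>e1. is_face (G (s + 1)) (scale lam (s + 1)) e1 \<and> e1 \<subseteq> e \<longrightarrow>
              (\<exists>f1. is_face (G s) (scale lam s) f1 \<and> f1 \<subseteq> f \<and>
                     gface (G s) (G (s + 1)) f1 = e1)) \<and>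
           (\<forall>e1 e2. is_facet (G (s + 1)) (scale lam (s + 1)) e e1 \<and>
                    is_facet (G (s + 1)) (scale lam (s + 1)) e e2 \<and> e1 \<inter> e2 = {} \<longrightarrow>
              (\<exists>f1 f2. is_facet (G s) (scale lam s) f f1 \<and> is_facet (G s) (scale lam s) f f2 \<and>
                       f1 \<inter> f2 = {} \<and>
                       gface (G s) (G (s + 1)) f1 = e1 \<and> gface (G s) (G (s + 1)) f2 = e2))"
proof -
  define a where "a = scale lam s"
  have a_pos: "a > 0" using scale_pos[OF lam_pos] by (simp add: a_def)
  obtain c where c: "G s = latt c a" using G_shape[OF lam_pos G0 G_step] by (auto simp: a_def)
  define b where "b = 2 *\<^sub>R c - Ot s + (a/2) *\<^sub>R eps s"
  have Gs1: "G (s+1) = latt b (2*a)"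
    using G_step latt_image[of a "Ot s" "eps s" c] a_pos c by (simp add: a_def b_def)
  have sc: "scale lam (s+1) = 2*a" by (simp add: a_def scale_succ)
  have hb: "\<forall>i. \<exists>p::int. b$i = c$i + a * (of_int p + 1/2)"
  proof
    fix i
    have "Ot s \<in> latt c a" using O_mem c by auto
    then obtain kk :: int where kk: "Ot s $ i = c$i + a * of_int kk" by (auto simp: latt_def)
    have "eps s $ i = -1 \<or> eps s $ i = 1" using eps_sign by auto
    then show "\<exists>p::int. b$i = c$i + a * (of_int p + 1/2)"
    proof
      assume h: "eps s $ i = -1"
      have "b$i = c$i + a * (of_int (-kk - 1) + 1/2)" by (simp add: b_def kk h algebra_simps)
      then show ?thesis by blast
    next
      assume h: "eps s $ i = 1"
      have "b$i = c$i + a * (of_int (-kk) + 1/2)" by (simp add: b_def kk h algebra_simps)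
      then show ?thesis by blast
    qed
  qed
  interpret setting a c b using a_pos hb by unfold_locales
  have "is_kface (latt c a) a k f" using f_face c by (simp add: a_def)
  note M = main[OF this]
  have c': "G s = latt c (scale lam s)" using c by (simp add: a_def)
  show ?thesis unfolding sc Gs1 c' a_def using M[unfolded a_def] .
qed

end
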